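(* Let $\mathbf C$ be an admissible category of lattices. Then the functor $\mathbb P:\mathbf{Conv}\to(\mathbf C^{\mathrm{conv}})^{op}$ is left adjoint to the functor $\mathrm{pt}:(\mathbf C^{\mathrm{conv}})^{op}\to\mathbf{Conv}$; that is, $\mathbb P\dashv\mathrm{pt}$ is an adjunction between $\mathbf{Conv}$ and $(\mathbf C^{\mathrm{conv}})^{op}$.
   Context: An inf-semilattice is a poset with all finite infima (including a top element $\top$). A filter on an inf-semilattice $L$ is a non-empty upward-closed subset of $L$ closed under binary meets; $L$ itself counts as a filter. $\mathbb F L$ is the set of filters on $L$, ordered by inclusion. For a set $X$, $\mathbb P(X)$ is its powerset ordered by inclusion; filters on $\mathbb P(X)$ are called filters of subsets of $X$. Let $\mathbf C$ be a category whose objects are inf-semilattices. A convergence $\mathbf C$-object is a pair $(L,\lim_L)$ where $L$ is a $\mathbf C$-object and $\lim_L:\mathbb F L\to L$ is monotone. The category $\mathbf C^{\mathrm{conv}}$ has these as objects; its morphisms $\varphi:L\to L'$ are the $\mathbf C$-morphisms that are continuous: $\lim_{L'}\mathcal F\le\varphi(\lim_L\varphi^{-1}(\mathcal F))$ for every $\mathcal F\in\mathbb F L'$. $\mathbf C$ is a category of lattices if all its objects are lattices and all its morphisms preserve finite suprema and finite infima. $\mathbf C$ is admissible if $\mathbb P(X)$ is a $\mathbf C$-object for every set $X$, and there are two classes of index sets $\mathcal I,\mathcal J$ such that for all $\mathbf C$-objects $L,L'$ the $\mathbf C$-morphisms $L\to L'$ are exactly the monotone maps preserving all $I$-indexed infima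 existing in $L$ ($I\in\mathcal I$) and all $J$-indexed suprema existing in $L$ ($J\in\mathcal J$). A convergence space is a set $X$ with a relation $\to$ between filters of subsets of $X$ and points of $X$ such that $\dot x\to x$ for all $x$, where $\dot x=\{S\subseteq X: x\in S\}$, and $\mathcal F\to x$, $\mathcal F\subseteq\mathcal G$ imply $\mathcal G\to x$. A map $f:X\to Y$ is continuous if $\mathcal F\to x$ implies $f[\mathcal F]\to f(x)$, where $f[\mathcal F]=\{B\subseteq Y: f^{-1}(B)\in\mathcal F\}$. These form the category $\mathbf{Conv}$. The functor $\mathbb P$ sends a convergence space $X$ to $(\mathbb P(X),\lim_{\mathbb P(X)})$ with $\lim_{\mathbb P(X)}\mathcal F=\{x\in X:\mathcal F\to x\}$, and a continuous map $f$ to $f^{-1}$. Points: let $1=\{*\}$ and $\mathbb P(1)=\{\emptyset,1\}$ with $\lim_{\mathbb P(1)}$ constantly equal to $1$. For a convergence $\mathbf C$-object $L$, $\mathrm{pt}\,L$ is the set of morphisms $L\to\mathbb P(1)$ in $\mathbf C^{\mathrm{conv}}$. For $\ell\in L$ let $\ell^\bullet=\{\varphi\in\mathrm{pt}\,L:\varphi(\ell)=1\}$; for a filter $\mathcal F$ of subsets of $\mathrm{pt}\,L$ let $\mathcal F^\circ=\{\ell\in L:\ell^\bullet\in\mathcal F\}$. The convergence on $\mathrm{pt}\,L$ is: $\mathcal F\to\varphi$ iff $\varphi\in(\lim_L\mathcal F^\circ)^\bullet$. On a morphism $\varphi:L\to L'$ of $\mathbf C^{\mathrm{conv}}$, $\mathrm{pt}\,\varphi:\mathrm{pt}\,L'\to\mathrm{pt}\,L$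 is $\psi\mapsto\psi\circ\varphi$. *)

theory Defs
  imports Main "HOL-Library.FuncSet"
begin

definition is_inf :: "'a set \<Rightarrow> ('a \<Rightarrow> 'a \<Rightarrow> bool) \<Rightarrow> 'a set \<Rightarrow> 'a \<Rightarrow> bool" where
  "is_inf A le S m \<longleftrightarrow> m \<in> A \<and> (\<forall>s\<in>S. le m s) \<and> (\<forall>z\<in>A. (\<forall>s\<in>S. le z s) \<longrightarrow> le z m)"

definition is_sup :: "'a set \<Rightarrow> ('a \<Rightarrow> 'a \<Rightarrow> bool) \<Rightarrow> 'a set \<Rightarrow> 'a \<Rightarrow> bool" where
  "is_sup A le S m \<longleftrightarrow> m \<in> A \<and> (\<forall>s\<in>S. le s m) \<and> (\<forall>z\<in>A. (\<forall>s\<in>S. le s z) \<longrightarrow> le m z)"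

definition bounded_lattice :: "'a set \<Rightarrow> ('a \<Rightarrow> 'a \<Rightarrow> bool) \<Rightarrow> bool" where
  "bounded_lattice A le \<longleftrightarrow>
     (\<forall>a\<in>A. le a a) \<and> (\<forall>a\<in>A. \<forall>b\<in>A. le a b \<and> le b a \<longrightarrow> a = b) \<and>
     (\<forall>a\<in>A. \<forall>b\<in>A. \<forall>c\<in>A. le a b \<and> le b c \<longrightarrow> le a c) \<and>
     (\<forall>S. S \<subseteq> A \<and> finite S \<longrightarrow> (\<exists>m. is_inf A le S m) \<and> (\<exists>m. is_sup A le S m))"

text \<open>Filters on an inf-semilattice (the whole carrier counts as a filter).\<close>
definition lfilter :: "'a set \<Rightarrow> ('a \<Rightarrow> 'a \<Rightarrow> bool) \<Rightarrow> 'a set \<Rightarrow> bool" where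
  "lfilter A le F \<longleftrightarrow> F \<noteq> {} \<and> F \<subseteq> A \<and> (\<forall>a\<in>F. \<forall>b\<in>A. le a b \<longrightarrow> b \<in> F) \<and>
     (\<forall>a\<in>F. \<forall>b\<in>F. \<forall>m. is_inf A le {a, b} m \<longrightarrow> m \<in> F)"

text \<open>Morphisms of the admissible category C determined by the classes II, JJ of index sets:
  monotone maps preserving all II-indexed infima and JJ-indexed suprema that exist.\<close>
definition C_hom :: "'i set set \<Rightarrow> 'j set set \<Rightarrow> 'a set \<Rightarrow> ('a \<Rightarrow> 'a \<Rightarrow> bool)
     \<Rightarrow> 'b set \<Rightarrow> ('b \<Rightarrow> 'b \<Rightarrow> bool) \<Rightarrow> ('a \<Rightarrow> 'b) \<Rightarrow> bool" where
  "C_hom II JJ A leA B leB \<phi> \<longleftrightarrow> \<phi> \<in> A \<rightarrow>\<^sub>E B \<and>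
     (\<forall>a\<in>A. \<forall>b\<in>A. leA a b \<longrightarrow> leB (\<phi> a) (\<phi> b)) \<and>
     (\<forall>I\<in>II. \<forall>x \<in> I \<rightarrow> A. \<forall>m. is_inf A leA (x ` I) m \<longrightarrow> is_inf B leB ((\<phi> \<circ> x) ` I) (\<phi> m)) \<and>
     (\<forall>J\<in>JJ. \<forall>x \<in> J \<rightarrow> A. \<forall>m. is_sup A leA (x ` J) m \<longrightarrow> is_sup B leB ((\<phi> \<circ> x) ` J) (\<phi> m))"

definition lattice_homs :: "'i set set \<Rightarrow> 'j set set \<Rightarrow> 'a set \<Rightarrow> ('a \<Rightarrow> 'a \<Rightarrow> bool)
     \<Rightarrow> 'b set \<Rightarrow> ('b \<Rightarrow> 'b \<Rightarrow> bool) \<Rightarrow> bool" where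
  "lattice_homs II JJ A leA B leB \<longleftrightarrow> (\<forall>\<phi>. C_hom II JJ A leA B leB \<phi> \<longrightarrow>
     (\<forall>S m. S \<subseteq> A \<and> finite S \<longrightarrow>
        (is_inf A leA S m \<longrightarrow> is_inf B leB (\<phi> ` S) (\<phi> m)) \<and>
        (is_sup A leA S m \<longrightarrow> is_sup B leB (\<phi> ` S) (\<phi> m))))"

abbreviation P1 :: "unit set set" where "P1 \<equiv> Pow UNIV"

text \<open>The full subcategory of C on the objects L, M, P(X), P(Y), P(1) is a category of lattices:
  all objects are lattices and all C-morphisms between them preserve finite infima and suprema.\<close>
definition lattice_cat_on :: "'i set set \<Rightarrow> 'j set set \<Rightarrow> 'l set \<Rightarrow> ('l \<Rightarrow> 'l \<Rightarrow> bool)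
     \<Rightarrow> 'm set \<Rightarrow> ('m \<Rightarrow> 'm \<Rightarrow> bool) \<Rightarrow> 'x set \<Rightarrow> 'y set \<Rightarrow> bool" where
  "lattice_cat_on II JJ L leL M leM X Y \<longleftrightarrow>
     bounded_lattice L leL \<and> bounded_lattice M leM \<and>
     lattice_homs II JJ L leL L leL \<and> lattice_homs II JJ L leL M leM \<and>
     lattice_homs II JJ L leL (Pow X) (\<subseteq>) \<and> lattice_homs II JJ L leL (Pow Y) (\<subseteq>) \<and>
     lattice_homs II JJ L leL P1 (\<subseteq>) \<and>
     lattice_homs II JJ M leM L leL \<and> lattice_homs II JJ M leM M leM \<and>
     lattice_homs II JJ M leM (Pow X) (\<subseteq>) \<and> lattice_homs II JJ M leM (Pow Y) (\<subseteq>) \<and>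
     lattice_homs II JJ M leM P1 (\<subseteq>) \<and>
     lattice_homs II JJ (Pow X) (\<subseteq>) L leL \<and> lattice_homs II JJ (Pow X) (\<subseteq>) M leM \<and>
     lattice_homs II JJ (Pow X) (\<subseteq>) (Pow X) (\<subseteq>) \<and> lattice_homs II JJ (Pow X) (\<subseteq>) (Pow Y) (\<subseteq>) \<and>
     lattice_homs II JJ (Pow X) (\<subseteq>) P1 (\<subseteq>) \<and>
     lattice_homs II JJ (Pow Y) (\<subseteq>) L leL \<and> lattice_homs II JJ (Pow Y) (\<subseteq>) M leM \<and>
     lattice_homs II JJ (Pow Y) (\<subseteq>) (Pow X) (\<subseteq>) \<and> lattice_homs II JJ (Pow Y) (\<subseteq>) (Pow Y) (\<subseteq>) \<and>
     lattice_homs II JJ (Pow Y) (\<subseteq>) P1 (\<subseteq>) \<and>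
     lattice_homs II JJ P1 (\<subseteq>) L leL \<and> lattice_homs II JJ P1 (\<subseteq>) M leM \<and>
     lattice_homs II JJ P1 (\<subseteq>) (Pow X) (\<subseteq>) \<and> lattice_homs II JJ P1 (\<subseteq>) (Pow Y) (\<subseteq>) \<and>
     lattice_homs II JJ P1 (\<subseteq>) P1 (\<subseteq>)"

definition conv_obj :: "'a set \<Rightarrow> ('a \<Rightarrow> 'a \<Rightarrow> bool) \<Rightarrow> ('a set \<Rightarrow> 'a) \<Rightarrow> bool" where
  "conv_obj A le lim \<longleftrightarrow> bounded_lattice A le \<and>
     (\<forall>F. lfilter A le F \<longrightarrow> lim F \<in> A) \<and>
     (\<forall>F G. lfilter A le F \<and> lfilter A le G \<and> F \<subseteq> G \<longrightarrow> le (lim F) (lim G))"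

definition continuous_map :: "'a set \<Rightarrow> ('a set \<Rightarrow> 'a) \<Rightarrow> 'b set \<Rightarrow> ('b \<Rightarrow> 'b \<Rightarrow> bool)
     \<Rightarrow> ('b set \<Rightarrow> 'b) \<Rightarrow> ('a \<Rightarrow> 'b) \<Rightarrow> bool" where
  "continuous_map A limA B leB limB \<phi> \<longleftrightarrow>
     (\<forall>F. lfilter B leB F \<longrightarrow> leB (limB F) (\<phi> (limA {a \<in> A. \<phi> a \<in> F})))"

definition cconv_hom :: "'i set set \<Rightarrow> 'j set set \<Rightarrow> 'a set \<Rightarrow> ('a \<Rightarrow> 'a \<Rightarrow> bool) \<Rightarrow> ('a set \<Rightarrow> 'a)
     \<Rightarrow> 'b set \<Rightarrow> ('b \<Rightarrow> 'b \<Rightarrow> bool) \<Rightarrow> ('b set \<Rightarrow> 'b) \<Rightarrow> ('a \<Rightarrow> 'b) set" where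
  "cconv_hom II JJ A leA limA B leB limB =
     {\<phi>. C_hom II JJ A leA B leB \<phi> \<and> continuous_map A limA B leB limB \<phi>}"

text \<open>Convergence spaces (filters of subsets of X are the filters on the lattice Pow X).\<close>
definition dot :: "'x set \<Rightarrow> 'x \<Rightarrow> 'x set set" where
  "dot X x = {S \<in> Pow X. x \<in> S}"

definition conv_space :: "'x set \<Rightarrow> ('x set set \<Rightarrow> 'x \<Rightarrow> bool) \<Rightarrow> bool" where
  "conv_space X c \<longleftrightarrow>
     (\<forall>F x. c F x \<longrightarrow> lfilter (Pow X) (\<subseteq>) F \<and> x \<in> X) \<and>
     (\<forall>x\<in>X. c (dot X x) x) \<and>
     (\<forall>F G x. c F x \<and> lfilter (Pow X) (\<subseteq>) G \<and> F \<subseteq> G \<longrightarrow> c G x)"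

definition fimg :: "'x set \<Rightarrow> 'y set \<Rightarrow> ('x \<Rightarrow> 'y) \<Rightarrow> 'x set set \<Rightarrow> 'y set set" where
  "fimg X Y f F = {B \<in> Pow Y. {x \<in> X. f x \<in> B} \<in> F}"

definition conv_hom :: "'x set \<Rightarrow> ('x set set \<Rightarrow> 'x \<Rightarrow> bool) \<Rightarrow> 'y set \<Rightarrow> ('y set set \<Rightarrow> 'y \<Rightarrow> bool)
     \<Rightarrow> ('x \<Rightarrow> 'y) set" where
  "conv_hom X cX Y cY = {f \<in> X \<rightarrow>\<^sub>E Y. \<forall>F x. cX F x \<longrightarrow> cY (fimg X Y f F) (f x)}"

definition Plim :: "'x set \<Rightarrow> ('x set set \<Rightarrow> 'x \<Rightarrow> bool) \<Rightarrow> 'x set set \<Rightarrow> 'x set" where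
  "Plim X c F = {x \<in> X. c F x}"

definition Pmap :: "'x set \<Rightarrow> 'y set \<Rightarrow> ('x \<Rightarrow> 'y) \<Rightarrow> 'y set \<Rightarrow> 'x set" where
  "Pmap X Y f = (\<lambda>S \<in> Pow Y. {x \<in> X. f x \<in> S})"

definition pt :: "'i set set \<Rightarrow> 'j set set \<Rightarrow> 'a set \<Rightarrow> ('a \<Rightarrow> 'a \<Rightarrow> bool) \<Rightarrow> ('a set \<Rightarrow> 'a)
     \<Rightarrow> ('a \<Rightarrow> unit set) set" where
  "pt II JJ A le lim = cconv_hom II JJ A le lim P1 (\<subseteq>) (\<lambda>_. UNIV)"

definition bul :: "'i set set \<Rightarrow> 'j set set \<Rightarrow> 'a set \<Rightarrow> ('a \<Rightarrow> 'a \<Rightarrow> bool) \<Rightarrow> ('a set \<Rightarrow> 'a)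
     \<Rightarrow> 'a \<Rightarrow> ('a \<Rightarrow> unit set) set" where
  "bul II JJ A le lim l = {\<phi> \<in> pt II JJ A le lim. \<phi> l = UNIV}"

definition circ :: "'i set set \<Rightarrow> 'j set set \<Rightarrow> 'a set \<Rightarrow> ('a \<Rightarrow> 'a \<Rightarrow> bool) \<Rightarrow> ('a set \<Rightarrow> 'a)
     \<Rightarrow> ('a \<Rightarrow> unit set) set set \<Rightarrow> 'a set" where
  "circ II JJ A le lim F = {l \<in> A. bul II JJ A le lim l \<in> F}"

definition ptconv :: "'i set set \<Rightarrow> 'j set set \<Rightarrow> 'a set \<Rightarrow> ('a \<Rightarrow> 'a \<Rightarrow> bool) \<Rightarrow> ('a set \<Rightarrow> 'a)
     \<Rightarrow> ('a \<Rightarrow> unit set) set set \<Rightarrow> ('a \<Rightarrow> unit set) \<Rightarrow> bool" where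
  "ptconv II JJ A le lim F \<phi> \<longleftrightarrow> lfilter (Pow (pt II JJ A le lim)) (\<subseteq>) F \<and>
     \<phi> \<in> bul II JJ A le lim (lim (circ II JJ A le lim F))"

definition ptmap :: "'i set set \<Rightarrow> 'j set set \<Rightarrow> 'b set \<Rightarrow> ('b \<Rightarrow> 'b \<Rightarrow> bool) \<Rightarrow> ('b set \<Rightarrow> 'b)
     \<Rightarrow> 'a set \<Rightarrow> ('a \<Rightarrow> 'b) \<Rightarrow> ('b \<Rightarrow> unit set) \<Rightarrow> ('a \<Rightarrow> unit set)" where
  "ptmap II JJ B leB limB A \<psi> = (\<lambda>\<chi> \<in> pt II JJ B leB limB. restrict (\<chi> \<circ> \<psi>) A)"

definition eta :: "'x set \<Rightarrow> 'x \<Rightarrow> 'x set \<Rightarrow> unit set" where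
  "eta X x = (\<lambda>S \<in> Pow X. if x \<in> S then UNIV else {})"

text \<open>The hom-set map \<open>Hom_{C^conv}(L, P X) \<rightarrow> Hom_Conv(X, pt L)\<close>, \<open>\<phi> \<mapsto> pt \<phi> \<circ> \<eta>_X\<close>.\<close>
definition transp :: "'i set set \<Rightarrow> 'j set set \<Rightarrow> 'x set \<Rightarrow> ('x set set \<Rightarrow> 'x \<Rightarrow> bool)
     \<Rightarrow> 'a set \<Rightarrow> ('a \<Rightarrow> 'x set) \<Rightarrow> 'x \<Rightarrow> 'a \<Rightarrow> unit set" where
  "transp II JJ X c A \<phi> = restrict (ptmap II JJ (Pow X) (\<subseteq>) (Plim X c) A \<phi> \<circ> eta X) X"

end

theory Submission
  imports Defs
begin

lemma PiE_Pi: "f \<in> A \<rightarrow>\<^sub>E B \<Longrightarrow> f \<in> A \<rightarrow> B"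
  by (simp add: PiE_def)

lemma unit_set_cases: "(S::unit set) = {} \<or> S = UNIV"
  by (metis (full_types) UNIV_I equals0I old.unit.exhaust UNIV_eq_I)

lemma is_inf_Pow: assumes "S \<subseteq> Pow X" shows "is_inf (Pow X) (\<subseteq>) S m \<longleftrightarrow> m = X \<inter> \<Inter>S"
proof
  assume h: "is_inf (Pow X) (\<subseteq>) S m"
  have a: "m \<subseteq> X \<inter> \<Inter>S" using h unfolding is_inf_def by auto
  have "X \<inter> \<Inter>S \<in> Pow X" "\<forall>s\<in>S. X \<inter> \<Inter>S \<subseteq> s" by auto
  then have "X \<inter> \<Inter>S \<subseteq> m" using h unfolding is_inf_def by (simp only: Ball_def)
  then show "m = X \<inter> \<Inter>S" using a by (rule subset_antisym[rotated])
next
  assume "m = X \<inter> \<Inter>S"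
  then show "is_inf (Pow X) (\<subseteq>) S m" unfolding is_inf_def by auto
qed

lemma is_sup_Pow: assumes "S \<subseteq> Pow X" shows "is_sup (Pow X) (\<subseteq>) S m \<longleftrightarrow> m = \<Union>S"
proof
  assume h: "is_sup (Pow X) (\<subseteq>) S m"
  have a: "\<Union>S \<subseteq> m" using h unfolding is_sup_def by auto
  have "\<Union>S \<in> Pow X" "\<forall>s\<in>S. s \<subseteq> \<Union>S" using assms by auto
  then have "m \<subseteq> \<Union>S" using h unfolding is_sup_def by (simp only: Ball_def)
  then show "m = \<Union>S" using a by (rule subset_antisym)
next
  assume "m = \<Union>S"
  then show "is_sup (Pow X) (\<subseteq>) S m" using assms unfolding is_sup_def by auto
qed

lemma is_inf_UNIV: "is_inf (UNIV::'a set set) (\<subseteq>) S m \<longleftrightarrow> m = \<Inter>S"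
  using is_inf_Pow[of S UNIV m] by simp

lemma is_sup_UNIV: "is_sup (UNIV::'a set set) (\<subseteq>) S m \<longleftrightarrow> m = \<Union>S"
  using is_sup_Pow[of S UNIV m] by simp

lemma is_inf_P1: "is_inf P1 (\<subseteq>) S m \<longleftrightarrow> m = \<Inter>S"
  using is_inf_Pow[of S UNIV m] by simp

lemma is_sup_P1: "is_sup P1 (\<subseteq>) S m \<longleftrightarrow> m = \<Union>S"
  using is_sup_Pow[of S UNIV m] by simp

lemma lfilter_Pow_meet:
  assumes "F \<subseteq> Pow X"
  shows "(\<forall>a\<in>F. \<forall>b\<in>F. \<forall>m. is_inf (Pow X) (\<subseteq>) {a, b} m \<longrightarrow> m \<in> F)
     \<longleftrightarrow> (\<forall>a\<in>F. \<forall>b\<in>F. a \<inter> b \<in> F)"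
proof -
  have "\<And>a b m. a \<in> F \<Longrightarrow> b \<in> F \<Longrightarrow> is_inf (Pow X) (\<subseteq>) {a, b} m \<longleftrightarrow> m = a \<inter> b"
  proof -
    fix a b m assume "a \<in> F" "b \<in> F"
    then have "{a, b} \<subseteq> Pow X" "X \<inter> \<Inter>{a, b} = a \<inter> b" using assms by auto
    then show "is_inf (Pow X) (\<subseteq>) {a, b} m \<longleftrightarrow> m = a \<inter> b" using is_inf_Pow by metis
  qed
  then show ?thesis by simp
qed

lemma lfilter_Pow: "lfilter (Pow X) (\<subseteq>) F \<longleftrightarrow> F \<noteq> {} \<and> F \<subseteq> Pow X \<and>
   (\<forall>a\<in>F. \<forall>b\<in>Pow X. a \<subseteq> b \<longrightarrow> b \<in> F) \<and> (\<forall>a\<in>F. \<forall>b\<in>F. a \<inter> b \<in> F)"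
proof (cases "F \<subseteq> Pow X")
  case True
  show ?thesis unfolding lfilter_def lfilter_Pow_meet[OF True] by (rule refl)
next
  case False
  then show ?thesis unfolding lfilter_def by simp
qed

lemma lfilter_Pow_top: "lfilter (Pow X) (\<subseteq>) F \<Longrightarrow> X \<in> F"
  unfolding lfilter_Pow by blast

lemma pow_bounded: "bounded_lattice (Pow X) (\<subseteq>)"
  unfolding bounded_lattice_def
proof (intro conjI allI impI)
  fix S assume S: "S \<subseteq> Pow X \<and> finite S"
  show "\<exists>m. is_inf (Pow X) (\<subseteq>) S m" using is_inf_Pow[of S X] S by blast
  show "\<exists>m. is_sup (Pow X) (\<subseteq>) S m" using is_sup_Pow[of S X] S by blast
qed auto

lemma pow_conv_obj: assumes X: "conv_space X c" shows "conv_obj (Pow X) (\<subseteq>) (Plim X c)"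
  unfolding conv_obj_def
proof (intro conjI allI impI)
  show "bounded_lattice (Pow X) (\<subseteq>)" by (rule pow_bounded)
  fix F show "Plim X c F \<in> Pow X" unfolding Plim_def by auto
next
  fix F G assume h: "lfilter (Pow X) (\<subseteq>) F \<and> lfilter (Pow X) (\<subseteq>) G \<and> F \<subseteq> G"
  have "\<And>x. c F x \<Longrightarrow> c G x" using X h unfolding conv_space_def by blast
  then show "Plim X c F \<subseteq> Plim X c G" unfolding Plim_def by auto
qed

lemma C_hom_comp:
  assumes "C_hom II JJ A leA B leB \<phi>" "C_hom II JJ B leB C leC \<chi>"
  shows "C_hom II JJ A leA C leC (restrict (\<chi> \<circ> \<phi>) A)"
proof -
  have fA: "\<phi> \<in> A \<rightarrow>\<^sub>E B" and gB: "\<chi> \<in> B \<rightarrow>\<^sub>E C" using assms unfolding C_hom_def by auto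
  have img: "\<And>x I. x \<in> I \<rightarrow> A \<Longrightarrow> (restrict (\<chi> \<circ> \<phi>) A \<circ> x) ` I = (\<chi> \<circ> (\<phi> \<circ> x)) ` I"
    by auto
  have px: "\<And>x I. x \<in> I \<rightarrow> A \<Longrightarrow> \<phi> \<circ> x \<in> I \<rightarrow> B" using fA by auto
  show ?thesis
    unfolding C_hom_def
  proof (intro conjI ballI allI impI)
    show "restrict (\<chi> \<circ> \<phi>) A \<in> A \<rightarrow>\<^sub>E C" using fA gB by auto
  next
    fix a b assume ab: "a \<in> A" "b \<in> A" "leA a b"
    have m1: "leB (\<phi> a) (\<phi> b)" using assms(1) ab unfolding C_hom_def by blast
    have "\<phi> a \<in> B" "\<phi> b \<in> B" using fA ab by auto
    then have "leC (\<chi> (\<phi> a)) (\<chi> (\<phi> b))" using assms(2) m1 unfolding C_hom_def by blast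
    then show "leC (restrict (\<chi> \<circ> \<phi>) A a) (restrict (\<chi> \<circ> \<phi>) A b)"
      using ab by simp
  next
    fix I x m assume I: "I \<in> II" and x: "x \<in> I \<rightarrow> A" and m: "is_inf A leA (x ` I) m"
    have "is_inf B leB ((\<phi> \<circ> x) ` I) (\<phi> m)" using assms(1) I x m unfolding C_hom_def by blast
    then have "is_inf C leC ((\<chi> \<circ> (\<phi> \<circ> x)) ` I) (\<chi> (\<phi> m))"
      using assms(2) I px[OF x] unfolding C_hom_def by blast
    moreover have "m \<in> A" using m unfolding is_inf_def by auto
    ultimately show "is_inf C leC ((restrict (\<chi> \<circ> \<phi>) A \<circ> x) ` I) (restrict (\<chi> \<circ> \<phi>) A m)"
      using img[OF x] by simp
  next
    fix I x m assume I: "I \<in> JJ" and x: "x \<in> I \<rightarrow> A" and m: "is_sup A leA (x ` I) m"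
    have "is_sup B leB ((\<phi> \<circ> x) ` I) (\<phi> m)" using assms(1) I x m unfolding C_hom_def by blast
    then have "is_sup C leC ((\<chi> \<circ> (\<phi> \<circ> x)) ` I) (\<chi> (\<phi> m))"
      using assms(2) I px[OF x] unfolding C_hom_def by blast
    moreover have "m \<in> A" using m unfolding is_sup_def by auto
    ultimately show "is_sup C leC ((restrict (\<chi> \<circ> \<phi>) A \<circ> x) ` I) (restrict (\<chi> \<circ> \<phi>) A m)"
      using img[OF x] by simp
  qed
qed

lemma preimage_lfilter:
  assumes h: "C_hom II JJ A leA B leB \<phi>" and lh: "lattice_homs II JJ A leA B leB"
    and bl: "bounded_lattice A leA" and F: "lfilter B leB F"
  shows "lfilter A leA {a\<in>A. \<phi> a \<in> F}"
proof -
  have fA: "\<phi> \<in> A \<rightarrow>\<^sub>E B" and mono: "\<forall>a\<in>A. \<forall>b\<in>A. leA a b \<longrightarrow> leB (\<phi> a) (\<phi> b)"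
    using h unfolding C_hom_def by auto
  have fin: "\<And>S m. S \<subseteq> A \<Longrightarrow> finite S \<Longrightarrow> is_inf A leA S m \<Longrightarrow> is_inf B leB (\<phi> ` S) (\<phi> m)"
    using lh h unfolding lattice_homs_def by blast
  obtain t where t: "is_inf A leA {} t" using bl unfolding bounded_lattice_def by blast
  have tB: "is_inf B leB {} (\<phi> t)" using fin[OF _ _ t] by simp
  obtain y where y: "y \<in> F" using F unfolding lfilter_def by blast
  have "y \<in> B" using F y unfolding lfilter_def by blast
  then have "leB y (\<phi> t)" using tB unfolding is_inf_def by blast
  moreover have "\<phi> t \<in> B" using tB unfolding is_inf_def by blast
  ultimately have "\<phi> t \<in> F" using F y unfolding lfilter_def by blast
  moreover have "t \<in> A" using t unfolding is_inf_def by blast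
  ultimately have ne: "{a\<in>A. \<phi> a \<in> F} \<noteq> {}" by blast
  have up: "\<forall>a\<in>{a\<in>A. \<phi> a \<in> F}. \<forall>b\<in>A. leA a b \<longrightarrow> b \<in> {a\<in>A. \<phi> a \<in> F}"
  proof (intro ballI impI)
    fix a b assume a: "a \<in> {a\<in>A. \<phi> a \<in> F}" and b: "b \<in> A" and ab: "leA a b"
    have "leB (\<phi> a) (\<phi> b)" using mono a b ab by blast
    moreover have "\<phi> b \<in> B" using fA b by auto
    ultimately show "b \<in> {a\<in>A. \<phi> a \<in> F}" using F a b unfolding lfilter_def by blast
  qed
  have meet: "\<forall>a\<in>{a\<in>A. \<phi> a \<in> F}. \<forall>b\<in>{a\<in>A. \<phi> a \<in> F}. \<forall>m. is_inf A leA {a, b} m \<longrightarrow> m \<in> {a\<in>A. \<phi> a \<in> F}"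
  proof (intro ballI allI impI)
    fix a b m assume a: "a \<in> {a\<in>A. \<phi> a \<in> F}" and b: "b \<in> {a\<in>A. \<phi> a \<in> F}" and m: "is_inf A leA {a, b} m"
    have "is_inf B leB {\<phi> a, \<phi> b} (\<phi> m)" using fin[OF _ _ m] a b by simp
    then have "\<phi> m \<in> F" using F a b unfolding lfilter_def by blast
    moreover have "m \<in> A" using m unfolding is_inf_def by blast
    ultimately show "m \<in> {a\<in>A. \<phi> a \<in> F}" by blast
  qed
  show ?thesis unfolding lfilter_def using ne up meet by blast
qed


lemma pt_C_hom: "\<chi> \<in> pt II JJ A le lim \<Longrightarrow> C_hom II JJ A le P1 (\<subseteq>) \<chi>"
  unfolding pt_def cconv_hom_def by auto

lemma pt_ext: "\<chi> \<in> pt II JJ A le lim \<Longrightarrow> \<chi> \<in> A \<rightarrow>\<^sub>E P1"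
  unfolding pt_def cconv_hom_def C_hom_def by auto

lemma pt_mono: "\<chi> \<in> pt II JJ A le lim \<Longrightarrow> a \<in> A \<Longrightarrow> b \<in> A \<Longrightarrow> le a b \<Longrightarrow> \<chi> a \<subseteq> \<chi> b"
  unfolding pt_def cconv_hom_def C_hom_def by auto

lemma pt_cont: "\<chi> \<in> pt II JJ A le lim \<Longrightarrow> lfilter P1 (\<subseteq>) F \<Longrightarrow> \<chi> (lim {a\<in>A. \<chi> a \<in> F}) = UNIV"
  unfolding pt_def cconv_hom_def continuous_map_def by auto

lemma pt_top: assumes "\<chi> \<in> pt II JJ A le lim" "lattice_homs II JJ A le P1 (\<subseteq>)" "is_inf A le {} t"
  shows "\<chi> t = UNIV"
proof -
  have "is_inf P1 (\<subseteq>) (\<chi> ` {}) (\<chi> t)" using assms pt_C_hom[OF assms(1)]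
    unfolding lattice_homs_def by blast
  then show ?thesis by (simp add: is_inf_UNIV)
qed

lemma pt_meet: assumes "\<chi> \<in> pt II JJ A le lim" "lattice_homs II JJ A le P1 (\<subseteq>)"
   "a \<in> A" "b \<in> A" "is_inf A le {a,b} m"
  shows "\<chi> m = \<chi> a \<inter> \<chi> b"
proof -
  have "is_inf P1 (\<subseteq>) (\<chi> ` {a,b}) (\<chi> m)" using assms pt_C_hom[OF assms(1)]
    unfolding lattice_homs_def by (meson empty_subsetI finite.emptyI finite.insertI insert_subset)
  then show ?thesis by (simp add: is_inf_UNIV)
qed

lemma lfilter_P1_UNIV: "lfilter P1 (\<subseteq>) F \<Longrightarrow> UNIV \<in> F"
  using lfilter_Pow_top by blast

lemma lfilter_single_UNIV: "lfilter P1 (\<subseteq>) {UNIV}"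
  unfolding lfilter_Pow by auto

lemma conv_obj_lim: "conv_obj A le lim \<Longrightarrow> lfilter A le F \<Longrightarrow> lim F \<in> A"
  unfolding conv_obj_def by blast

lemma conv_obj_bl: "conv_obj A le lim \<Longrightarrow> bounded_lattice A le"
  unfolding conv_obj_def by blast

lemma conv_obj_mono: "conv_obj A le lim \<Longrightarrow> lfilter A le F \<Longrightarrow> lfilter A le G \<Longrightarrow> F \<subseteq> G \<Longrightarrow> le (lim F) (lim G)"
  unfolding conv_obj_def by blast

lemma pt_comp:
  assumes A: "conv_obj A leA limA" and B: "conv_obj B leB limB"
    and phi: "\<phi> \<in> cconv_hom II JJ A leA limA B leB limB" and chi: "\<chi> \<in> pt II JJ B leB limB"
    and lAB: "lattice_homs II JJ A leA B leB" and lB1: "lattice_homs II JJ B leB P1 (\<subseteq>)"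
  shows "restrict (\<chi> \<circ> \<phi>) A \<in> pt II JJ A leA limA"
proof -
  have hphi: "C_hom II JJ A leA B leB \<phi>" and cphi: "continuous_map A limA B leB limB \<phi>"
    using phi unfolding cconv_hom_def by auto
  have fA: "\<phi> \<in> A \<rightarrow>\<^sub>E B" using hphi unfolding C_hom_def by auto
  have hc: "C_hom II JJ A leA P1 (\<subseteq>) (restrict (\<chi> \<circ> \<phi>) A)"
    using C_hom_comp[OF hphi pt_C_hom[OF chi]] .
  have "continuous_map A limA P1 (\<subseteq>) (\<lambda>_. UNIV) (restrict (\<chi> \<circ> \<phi>) A)"
    unfolding continuous_map_def
  proof (intro allI impI)
    fix F assume F: "lfilter P1 (\<subseteq>) F"
    define G where "G = {b\<in>B. \<chi> b \<in> F}"
    define H where "H = {a\<in>A. \<phi> a \<in> G}"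
    have G: "lfilter B leB G" unfolding G_def
      by (rule preimage_lfilter[OF pt_C_hom[OF chi] lB1 conv_obj_bl[OF B] F])
    have H: "lfilter A leA H" unfolding H_def
      by (rule preimage_lfilter[OF hphi lAB conv_obj_bl[OF A] G])
    have limH: "limA H \<in> A" using conv_obj_lim[OF A H] .
    have limG: "limB G \<in> B" using conv_obj_lim[OF B G] .
    have "leB (limB G) (\<phi> (limA {a\<in>A. \<phi> a \<in> G}))" using cphi G unfolding continuous_map_def by blast
    then have le: "leB (limB G) (\<phi> (limA H))" unfolding H_def .
    have "\<chi> (limB G) = UNIV" unfolding G_def using pt_cont[OF chi F] .
    moreover have "\<chi> (limB G) \<subseteq> \<chi> (\<phi> (limA H))"
      using pt_mono[OF chi limG _ le] fA limH by auto
    ultimately have "\<chi> (\<phi> (limA H)) = UNIV" by auto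
    moreover have "{a \<in> A. restrict (\<chi> \<circ> \<phi>) A a \<in> F} = H"
      unfolding H_def G_def using fA by auto
    ultimately show "UNIV \<subseteq> restrict (\<chi> \<circ> \<phi>) A (limA {a \<in> A. restrict (\<chi> \<circ> \<phi>) A a \<in> F})"
      using limH by simp
  qed
  then show ?thesis using hc unfolding pt_def cconv_hom_def by auto
qed


lemma eta_pt:
  assumes X: "conv_space X c" and x: "x \<in> X"
  shows "eta X x \<in> pt II JJ (Pow X) (\<subseteq>) (Plim X c)"
proof -
  have ext: "eta X x \<in> Pow X \<rightarrow>\<^sub>E P1" unfolding eta_def by auto
  have hom: "C_hom II JJ (Pow X) (\<subseteq>) P1 (\<subseteq>) (eta X x)"
    unfolding C_hom_def
  proof (intro conjI ballI allI impI)
    show "eta X x \<in> Pow X \<rightarrow>\<^sub>E P1" by (rule ext)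
  next
    fix a b assume "a \<in> Pow X" "b \<in> Pow X" "a \<subseteq> b"
    then show "eta X x a \<subseteq> eta X x b" unfolding eta_def by auto
  next
    fix I y m assume y: "y \<in> I \<rightarrow> Pow X" and m: "is_inf (Pow X) (\<subseteq>) (y ` I) m"
    have m': "m = X \<inter> \<Inter>(y ` I)" using m y by (subst (asm) is_inf_Pow) auto
    have ey: "\<And>i. i \<in> I \<Longrightarrow> (eta X x \<circ> y) i = (if x \<in> y i then UNIV else {})"
    proof -
      fix i assume "i \<in> I" then have "y i \<in> Pow X" using y by blast
      then show "(eta X x \<circ> y) i = (if x \<in> y i then UNIV else {})" unfolding eta_def by simp
    qed
    have img: "(eta X x \<circ> y) ` I = (\<lambda>i. if x \<in> y i then UNIV else {}) ` I"
      by (rule image_cong[OF refl ey])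
    have "eta X x m = (if x \<in> m then UNIV else {})" using m' by (simp add: eta_def)
    also have "\<dots> = \<Inter>((\<lambda>i. if x \<in> y i then UNIV else {}) ` I)"
      using m' x by auto
    finally show "is_inf P1 (\<subseteq>) ((eta X x \<circ> y) ` I) (eta X x m)"
      unfolding is_inf_P1 img .
  next
    fix I y m assume y: "y \<in> I \<rightarrow> Pow X" and m: "is_sup (Pow X) (\<subseteq>) (y ` I) m"
    have m': "m = \<Union>(y ` I)" using m y by (subst (asm) is_sup_Pow) auto
    have mX: "m \<subseteq> X" using m' y by auto
    have ey: "\<And>i. i \<in> I \<Longrightarrow> (eta X x \<circ> y) i = (if x \<in> y i then UNIV else {})"
    proof -
      fix i assume "i \<in> I" then have "y i \<in> Pow X" using y by blast
      then show "(eta X x \<circ> y) i = (if x \<in> y i then UNIV else {})" unfolding eta_def by simp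
    qed
    have img: "(eta X x \<circ> y) ` I = (\<lambda>i. if x \<in> y i then UNIV else {}) ` I"
      by (rule image_cong[OF refl ey])
    have "eta X x m = (if x \<in> m then UNIV else {})" using mX by (simp add: eta_def)
    also have "\<dots> = \<Union>((\<lambda>i. if x \<in> y i then UNIV else {}) ` I)"
      using m' x by auto
    finally show "is_sup P1 (\<subseteq>) ((eta X x \<circ> y) ` I) (eta X x m)"
      unfolding is_sup_P1 img .
  qed
  have "continuous_map (Pow X) (Plim X c) P1 (\<subseteq>) (\<lambda>_. UNIV) (eta X x)"
    unfolding continuous_map_def
  proof (intro allI impI)
    fix F assume F: "lfilter P1 (\<subseteq>) F"
    define Q where "Q = {a \<in> Pow X. eta X x a \<in> F}"
    have U: "UNIV \<in> F" using lfilter_P1_UNIV[OF F] .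
    have Fup: "\<And>a b. a \<in> F \<Longrightarrow> a \<subseteq> b \<Longrightarrow> b \<in> F" using F unfolding lfilter_Pow
      by blast
    have Fm: "\<And>a b. a \<in> F \<Longrightarrow> b \<in> F \<Longrightarrow> a \<inter> b \<in> F" using F unfolding lfilter_Pow
      by blast
    have ea: "\<And>a. a \<subseteq> X \<Longrightarrow> eta X x a = (if x \<in> a then UNIV else {})"
      unfolding eta_def by simp
    have dQ: "dot X x \<subseteq> Q" unfolding dot_def Q_def eta_def using U by auto
    have Q: "lfilter (Pow X) (\<subseteq>) Q"
      unfolding lfilter_Pow
    proof (intro conjI ballI allI impI)
      show "Q \<noteq> {}" using dQ x unfolding dot_def by auto
      show "Q \<subseteq> Pow X" unfolding Q_def by auto
    next
      fix a b assume h: "a \<in> Q" "b \<in> Pow X" "a \<subseteq> b"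
      then have "a \<subseteq> X" "b \<subseteq> X" "eta X x a \<in> F" unfolding Q_def by auto
      moreover have "eta X x a \<subseteq> eta X x b" using h(3) calculation(1,2) ea by auto
      ultimately show "b \<in> Q" unfolding Q_def using Fup by auto
    next
      fix a b assume h: "a \<in> Q" "b \<in> Q"
      then have "a \<subseteq> X" "b \<subseteq> X" "eta X x a \<in> F" "eta X x b \<in> F" unfolding Q_def by auto
      moreover have "eta X x (a \<inter> b) = eta X x a \<inter> eta X x b" using calculation(1,2) ea
        by (simp add: Int_absorb2 le_infI1)
      ultimately show "a \<inter> b \<in> Q" unfolding Q_def using Fm by auto
    qed
    have "c (dot X x) x" using X x unfolding conv_space_def by blast
    then have "c Q x" using X Q dQ unfolding conv_space_def by blast
    then have "x \<in> Plim X c Q" unfolding Plim_def using x by auto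
    moreover have "Plim X c Q \<subseteq> X" unfolding Plim_def by auto
    ultimately have "eta X x (Plim X c Q) = UNIV" using ea[of "Plim X c Q"] by simp
    then show "UNIV \<subseteq> eta X x (Plim X c {a \<in> Pow X. eta X x a \<in> F})"
      unfolding Q_def by simp
  qed
  then show ?thesis using hom unfolding pt_def cconv_hom_def by auto
qed

lemma transp_apply:
  assumes X: "conv_space X c" and x: "x \<in> X" and phi: "\<forall>l\<in>A. \<phi> l \<in> Pow X"
  shows "transp II JJ X c A \<phi> x = (\<lambda>l\<in>A. if x \<in> \<phi> l then UNIV else {})"
proof -
  have "eta X x \<in> pt II JJ (Pow X) (\<subseteq>) (Plim X c)" using eta_pt[OF X x] .
  then show ?thesis using x phi unfolding transp_def ptmap_def
    by (auto simp: eta_def intro!: ext)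
qed

lemma fimg_lfilter:
  assumes f: "f \<in> X \<rightarrow> Y" and F: "lfilter (Pow X) (\<subseteq>) F"
  shows "lfilter (Pow Y) (\<subseteq>) (fimg X Y f F)"
  unfolding lfilter_Pow
proof (intro conjI ballI allI impI)
  have "{x \<in> X. f x \<in> Y} = X" using f by auto
  then show "fimg X Y f F \<noteq> {}" unfolding fimg_def using lfilter_Pow_top[OF F] by auto
  show "fimg X Y f F \<subseteq> Pow Y" unfolding fimg_def by auto
next
  fix a b assume a: "a \<in> fimg X Y f F" and bY: "b \<in> Pow Y" and ab0: "a \<subseteq> b"
  then have ab: "a \<subseteq> b \<and> b \<subseteq> Y" by auto
  have "{x \<in> X. f x \<in> a} \<in> F" "{x \<in> X. f x \<in> a} \<subseteq> {x \<in> X. f x \<in> b}"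
    using a ab unfolding fimg_def by auto
  moreover have "{x \<in> X. f x \<in> b} \<in> Pow X" by auto
  ultimately have "{x \<in> X. f x \<in> b} \<in> F" using F unfolding lfilter_Pow by blast
  then show "b \<in> fimg X Y f F" using ab unfolding fimg_def by auto
next
  fix a b assume a: "a \<in> fimg X Y f F" and b: "b \<in> fimg X Y f F"
  then have "{x \<in> X. f x \<in> a} \<inter> {x \<in> X. f x \<in> b} \<in> F"
    using F unfolding fimg_def lfilter_Pow by blast
  moreover have "{x \<in> X. f x \<in> a} \<inter> {x \<in> X. f x \<in> b} = {x \<in> X. f x \<in> a \<inter> b}" by auto
  ultimately show "a \<inter> b \<in> fimg X Y f F" using a unfolding fimg_def by auto
qed

lemma bul_sub: "bul II JJ A le lim l \<subseteq> pt II JJ A le lim"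
  unfolding bul_def by auto

lemma circ_lfilter:
  assumes A: "conv_obj A le lim" and lh: "lattice_homs II JJ A le P1 (\<subseteq>)"
    and F: "lfilter (Pow (pt II JJ A le lim)) (\<subseteq>) F"
  shows "lfilter A le (circ II JJ A le lim F)"
proof -
  let ?P = "pt II JJ A le lim"
  have bl: "bounded_lattice A le" using conv_obj_bl[OF A] .
  obtain t where t: "is_inf A le {} t" using bl unfolding bounded_lattice_def by blast
  have tA: "t \<in> A" using t unfolding is_inf_def by auto
  have "bul II JJ A le lim t = ?P" unfolding bul_def using pt_top[OF _ lh t] by auto
  then have "t \<in> circ II JJ A le lim F" unfolding circ_def using tA lfilter_Pow_top[OF F] by auto
  then have ne: "circ II JJ A le lim F \<noteq> {}" by auto
  have up: "\<forall>a\<in>circ II JJ A le lim F. \<forall>b\<in>A. le a b \<longrightarrow> b \<in> circ II JJ A le lim F"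
  proof (intro ballI impI)
    fix a b assume a: "a \<in> circ II JJ A le lim F" and b: "b \<in> A" and ab: "le a b"
    have aA: "a \<in> A" using a unfolding circ_def by auto
    have "\<And>\<chi>. \<chi> \<in> pt II JJ A le lim \<Longrightarrow> \<chi> a \<subseteq> \<chi> b"
      using pt_mono aA b ab by metis
    then have s: "bul II JJ A le lim a \<subseteq> bul II JJ A le lim b"
      unfolding bul_def by auto
    have "bul II JJ A le lim a \<in> F" using a unfolding circ_def by auto
    moreover have "bul II JJ A le lim b \<in> Pow (pt II JJ A le lim)" using bul_sub by (simp only: Pow_iff)
    ultimately have "bul II JJ A le lim b \<in> F" using F s unfolding lfilter_Pow by blast
    then show "b \<in> circ II JJ A le lim F" using b unfolding circ_def by auto
  qed
  have meet: "\<forall>a\<in>circ II JJ A le lim F. \<forall>b\<in>circ II JJ A le lim F. \<forall>m. is_inf A le {a, b} m \<longrightarrow> m \<in> circ II JJ A le lim F"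
  proof (intro ballI allI impI)
    fix a b m assume a: "a \<in> circ II JJ A le lim F" and b: "b \<in> circ II JJ A le lim F"
      and m: "is_inf A le {a, b} m"
    have aA: "a \<in> A" and bA: "b \<in> A" using a b unfolding circ_def by auto
    have mA: "m \<in> A" using m unfolding is_inf_def by auto
    have "bul II JJ A le lim m = bul II JJ A le lim a \<inter> bul II JJ A le lim b"
      unfolding bul_def using pt_meet[of _ II JJ A le lim, OF _ lh aA bA m] by auto
    then show "m \<in> circ II JJ A le lim F" using a b mA F unfolding circ_def lfilter_Pow by auto
  qed
  show ?thesis unfolding lfilter_def using ne up meet unfolding circ_def by blast
qed

lemma pt_conv_space:
  assumes A: "conv_obj A le lim" and lh: "lattice_homs II JJ A le P1 (\<subseteq>)"
  shows "conv_space (pt II JJ A le lim) (ptconv II JJ A le lim)"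
  unfolding conv_space_def
proof (intro conjI allI impI ballI)
  fix F \<phi> assume "ptconv II JJ A le lim F \<phi>"
  then show "lfilter (Pow (pt II JJ A le lim)) (\<subseteq>) F" "\<phi> \<in> pt II JJ A le lim"
    unfolding ptconv_def bul_def by auto
next
  fix \<phi> assume phi: "\<phi> \<in> pt II JJ A le lim"
  have d: "lfilter (Pow (pt II JJ A le lim)) (\<subseteq>) (dot (pt II JJ A le lim) \<phi>)"
    unfolding lfilter_Pow dot_def using phi by auto
  have "circ II JJ A le lim (dot (pt II JJ A le lim) \<phi>) = {l \<in> A. \<phi> l \<in> {UNIV}}"
    unfolding circ_def dot_def bul_def using phi by auto
  then have "\<phi> (lim (circ II JJ A le lim (dot (pt II JJ A le lim) \<phi>))) = UNIV"
    using pt_cont[OF phi lfilter_single_UNIV] by simp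
  then show "ptconv II JJ A le lim (dot (pt II JJ A le lim) \<phi>) \<phi>"
    unfolding ptconv_def bul_def using d phi by auto
next
  fix F G \<phi> assume "ptconv II JJ A le lim F \<phi> \<and> lfilter (Pow (pt II JJ A le lim)) (\<subseteq>) G \<and> F \<subseteq> G"
  then have F: "lfilter (Pow (pt II JJ A le lim)) (\<subseteq>) F" and G: "lfilter (Pow (pt II JJ A le lim)) (\<subseteq>) G"
    and FG: "F \<subseteq> G" and phi: "\<phi> \<in> pt II JJ A le lim"
    and v: "\<phi> (lim (circ II JJ A le lim F)) = UNIV"
    unfolding ptconv_def bul_def by auto
  have cF: "lfilter A le (circ II JJ A le lim F)" using circ_lfilter[OF A lh F] .
  have cG: "lfilter A le (circ II JJ A le lim G)" using circ_lfilter[OF A lh G] .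
  have sub: "circ II JJ A le lim F \<subseteq> circ II JJ A le lim G" unfolding circ_def using FG by auto
  have "le (lim (circ II JJ A le lim F)) (lim (circ II JJ A le lim G))"
    using conv_obj_mono[OF A cF cG sub] .
  then have "\<phi> (lim (circ II JJ A le lim F)) \<subseteq> \<phi> (lim (circ II JJ A le lim G))"
    using pt_mono[OF phi conv_obj_lim[OF A cF] conv_obj_lim[OF A cG]] by blast
  then show "ptconv II JJ A le lim G \<phi>" using v G phi unfolding ptconv_def bul_def by auto
qed


lemma Pmap_apply: "a \<subseteq> Y \<Longrightarrow> Pmap X Y f a = {x \<in> X. f x \<in> a}"
  unfolding Pmap_def by simp

lemma Pmap_cconv:
  assumes f: "f \<in> conv_hom X cX Y cY"
  shows "Pmap X Y f \<in> cconv_hom II JJ (Pow Y) (\<subseteq>) (Plim Y cY) (Pow X) (\<subseteq>) (Plim X cX)"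
proof -
  have fXY: "f \<in> X \<rightarrow>\<^sub>E Y" and fc: "\<And>F x. cX F x \<Longrightarrow> cY (fimg X Y f F) (f x)"
    using f unfolding conv_hom_def by auto
  have fY: "\<And>x. x \<in> X \<Longrightarrow> f x \<in> Y" using fXY by auto
  have hom: "C_hom II JJ (Pow Y) (\<subseteq>) (Pow X) (\<subseteq>) (Pmap X Y f)"
    unfolding C_hom_def
  proof (intro conjI ballI allI impI)
    show "Pmap X Y f \<in> Pow Y \<rightarrow>\<^sub>E Pow X" unfolding Pmap_def by auto
  next
    fix a b assume "a \<in> Pow Y" "b \<in> Pow Y" "a \<subseteq> b"
    then show "Pmap X Y f a \<subseteq> Pmap X Y f b" by (auto simp: Pmap_apply)
  next
    fix I y m assume y: "y \<in> I \<rightarrow> Pow Y" and m: "is_inf (Pow Y) (\<subseteq>) (y ` I) m"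
    have yI: "y ` I \<subseteq> Pow Y" using y by auto
    have m': "m = Y \<inter> \<Inter>(y ` I)" using m is_inf_Pow[OF yI] by simp
    have img: "(Pmap X Y f \<circ> y) ` I = (\<lambda>i. {x \<in> X. f x \<in> y i}) ` I"
    proof (rule image_cong[OF refl])
      fix i assume "i \<in> I" then have "y i \<subseteq> Y" using y by blast
      then show "(Pmap X Y f \<circ> y) i = {x \<in> X. f x \<in> y i}" by (simp add: Pmap_apply)
    qed
    have "Pmap X Y f m = {x \<in> X. f x \<in> m}" using m' by (simp add: Pmap_apply)
    also have "\<dots> = X \<inter> \<Inter>((\<lambda>i. {x \<in> X. f x \<in> y i}) ` I)" using m' fY by auto
    finally have eq: "Pmap X Y f m = X \<inter> \<Inter>((Pmap X Y f \<circ> y) ` I)" using img by simp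
    have "(Pmap X Y f \<circ> y) ` I \<subseteq> Pow X" using img by auto
    then show "is_inf (Pow X) (\<subseteq>) ((Pmap X Y f \<circ> y) ` I) (Pmap X Y f m)"
      using eq by (simp add: is_inf_Pow)
  next
    fix I y m assume y: "y \<in> I \<rightarrow> Pow Y" and m: "is_sup (Pow Y) (\<subseteq>) (y ` I) m"
    have yI: "y ` I \<subseteq> Pow Y" using y by auto
    have m': "m = \<Union>(y ` I)" using m is_sup_Pow[OF yI] by simp
    have mY: "m \<subseteq> Y" using m' yI by auto
    have img: "(Pmap X Y f \<circ> y) ` I = (\<lambda>i. {x \<in> X. f x \<in> y i}) ` I"
    proof (rule image_cong[OF refl])
      fix i assume "i \<in> I" then have "y i \<subseteq> Y" using y by blast
      then show "(Pmap X Y f \<circ> y) i = {x \<in> X. f x \<in> y i}" by (simp add: Pmap_apply)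
    qed
    have "Pmap X Y f m = {x \<in> X. f x \<in> m}" using mY by (simp add: Pmap_apply)
    also have "\<dots> = \<Union>((\<lambda>i. {x \<in> X. f x \<in> y i}) ` I)" using m' by auto
    finally have eq: "Pmap X Y f m = \<Union>((Pmap X Y f \<circ> y) ` I)" using img by simp
    have "(Pmap X Y f \<circ> y) ` I \<subseteq> Pow X" using img by auto
    then show "is_sup (Pow X) (\<subseteq>) ((Pmap X Y f \<circ> y) ` I) (Pmap X Y f m)"
      using eq by (simp add: is_sup_Pow)
  qed
  have "continuous_map (Pow Y) (Plim Y cY) (Pow X) (\<subseteq>) (Plim X cX) (Pmap X Y f)"
    unfolding continuous_map_def
  proof (intro allI impI subsetI)
    fix F x assume F: "lfilter (Pow X) (\<subseteq>) F" and x: "x \<in> Plim X cX F"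
    have "{a \<in> Pow Y. Pmap X Y f a \<in> F} = fimg X Y f F" unfolding fimg_def by (auto simp: Pmap_apply)
    moreover have "cY (fimg X Y f F) (f x)" using fc x unfolding Plim_def by auto
    moreover have "x \<in> X" using x unfolding Plim_def by auto
    moreover have "Plim Y cY (fimg X Y f F) \<subseteq> Y" unfolding Plim_def by auto
    ultimately show "x \<in> Pmap X Y f (Plim Y cY {a \<in> Pow Y. Pmap X Y f a \<in> F})"
      using fY by (auto simp: Pmap_apply Plim_def)
  qed
  then show ?thesis using hom unfolding cconv_hom_def by auto
qed

lemma ptmap_conv_hom:
  assumes L: "conv_obj L leL limL" and M: "conv_obj M leM limM"
    and psi: "\<psi> \<in> cconv_hom II JJ L leL limL M leM limM"
    and lLM: "lattice_homs II JJ L leL M leM" and lM1: "lattice_homs II JJ M leM P1 (\<subseteq>)"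
    and lL1: "lattice_homs II JJ L leL P1 (\<subseteq>)"
  shows "ptmap II JJ M leM limM L \<psi> \<in> conv_hom (pt II JJ M leM limM) (ptconv II JJ M leM limM)
                       (pt II JJ L leL limL) (ptconv II JJ L leL limL)"
proof -
  let ?PM = "pt II JJ M leM limM" and ?PL = "pt II JJ L leL limL" and ?p = "ptmap II JJ M leM limM L \<psi>"
  have hpsi: "C_hom II JJ L leL M leM \<psi>" and cpsi: "continuous_map L limL M leM limM \<psi>"
    using psi unfolding cconv_hom_def by auto
  have fA: "\<psi> \<in> L \<rightarrow>\<^sub>E M" using hpsi unfolding C_hom_def by auto
  have pin: "\<And>\<chi>. \<chi> \<in> ?PM \<Longrightarrow> ?p \<chi> \<in> ?PL"
    unfolding ptmap_def using pt_comp[OF L M psi _ lLM lM1] by auto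
  have pap: "\<And>\<chi> l. \<chi> \<in> ?PM \<Longrightarrow> l \<in> L \<Longrightarrow> ?p \<chi> l = \<chi> (\<psi> l)"
    unfolding ptmap_def by auto
  have ext: "?p \<in> ?PM \<rightarrow>\<^sub>E ?PL" using pin unfolding ptmap_def by auto
  show ?thesis unfolding conv_hom_def
  proof (intro CollectI conjI allI impI ext)
    fix F \<chi> assume c: "ptconv II JJ M leM limM F \<chi>"
    then have F: "lfilter (Pow ?PM) (\<subseteq>) F" and chi: "\<chi> \<in> ?PM"
      and v: "\<chi> (limM (circ II JJ M leM limM F)) = UNIV"
      unfolding ptconv_def bul_def by auto
    have cF: "lfilter M leM (circ II JJ M leM limM F)" using circ_lfilter[OF M lM1 F] .
    have fi: "lfilter (Pow ?PL) (\<subseteq>) (fimg ?PM ?PL ?p F)"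
      using fimg_lfilter[OF PiE_Pi[OF ext] F] by simp
    have eq: "circ II JJ L leL limL (fimg ?PM ?PL ?p F) = {a \<in> L. \<psi> a \<in> circ II JJ M leM limM F}"
    proof -
      have "\<And>l. l \<in> L \<Longrightarrow> {\<chi> \<in> ?PM. ?p \<chi> \<in> bul II JJ L leL limL l} = bul II JJ M leM limM (\<psi> l)"
        unfolding bul_def using pin pap by auto
      then show ?thesis unfolding circ_def fimg_def using bul_sub fA by fastforce
    qed
    have H: "lfilter L leL {a \<in> L. \<psi> a \<in> circ II JJ M leM limM F}"
      using preimage_lfilter[OF hpsi lLM conv_obj_bl[OF L] cF] .
    have limH: "limL {a \<in> L. \<psi> a \<in> circ II JJ M leM limM F} \<in> L" using conv_obj_lim[OF L H] .
    have "leM (limM (circ II JJ M leM limM F)) (\<psi> (limL {a \<in> L. \<psi> a \<in> circ II JJ M leM limM F}))"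
      using cpsi cF unfolding continuous_map_def by blast
    then have "\<chi> (limM (circ II JJ M leM limM F)) \<subseteq> \<chi> (\<psi> (limL {a \<in> L. \<psi> a \<in> circ II JJ M leM limM F}))"
      using pt_mono[OF chi conv_obj_lim[OF M cF]] fA limH by auto
    then have "?p \<chi> (limL (circ II JJ L leL limL (fimg ?PM ?PL ?p F))) = UNIV"
      unfolding eq using v pap[OF chi limH] by auto
    then show "ptconv II JJ L leL limL (fimg ?PM ?PL ?p F) (?p \<chi>)"
      unfolding ptconv_def bul_def using fi pin[OF chi] by auto
  qed
qed

lemma conv_space_D: assumes "conv_space X c" "c F x" shows "lfilter (Pow X) (\<subseteq>) F" "x \<in> X"
proof -
  have "\<forall>F x. c F x \<longrightarrow> lfilter (Pow X) (\<subseteq>) F \<and> x \<in> X" using assms(1) unfolding conv_space_def by (rule conjunct1)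
  then show "lfilter (Pow X) (\<subseteq>) F" "x \<in> X" using assms(2) by simp_all
qed

lemma transp_conv_hom:
  assumes X: "conv_space X c" and L: "conv_obj L leL limL"
    and phi: "\<phi> \<in> cconv_hom II JJ L leL limL (Pow X) (\<subseteq>) (Plim X c)"
    and lLX: "lattice_homs II JJ L leL (Pow X) (\<subseteq>)" and lX1: "lattice_homs II JJ (Pow X) (\<subseteq>) P1 (\<subseteq>)"
    and lL1: "lattice_homs II JJ L leL P1 (\<subseteq>)"
  shows "transp II JJ X c L \<phi> \<in> conv_hom X c (pt II JJ L leL limL) (ptconv II JJ L leL limL)"
proof -
  let ?PL = "pt II JJ L leL limL" and ?t = "transp II JJ X c L \<phi>"
  have hphi: "C_hom II JJ L leL (Pow X) (\<subseteq>) \<phi>" and cphi: "continuous_map L limL (Pow X) (\<subseteq>) (Plim X c) \<phi>"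
    using phi unfolding cconv_hom_def by auto
  have fA: "\<phi> \<in> L \<rightarrow>\<^sub>E Pow X" using hphi unfolding C_hom_def by auto
  have PX: "conv_obj (Pow X) (\<subseteq>) (Plim X c)" using pow_conv_obj[OF X] .
  have tin: "\<And>x. x \<in> X \<Longrightarrow> ?t x \<in> ?PL"
  proof -
    fix x assume x: "x \<in> X"
    have "?t x = ptmap II JJ (Pow X) (\<subseteq>) (Plim X c) L \<phi> (eta X x)" unfolding transp_def using x by auto
    also have "\<dots> = restrict (eta X x \<circ> \<phi>) L" unfolding ptmap_def using eta_pt[OF X x] by auto
    finally show "?t x \<in> ?PL" using pt_comp[OF L PX phi eta_pt[OF X x] lLX lX1] by simp
  qed
  have tap: "\<And>x l. x \<in> X \<Longrightarrow> l \<in> L \<Longrightarrow> ?t x l = (if x \<in> \<phi> l then UNIV else {})"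
  proof -
    fix x l assume x: "x \<in> X" and l: "l \<in> L"
    have phiX: "\<forall>l\<in>L. \<phi> l \<in> Pow X" using fA by auto
    show "?t x l = (if x \<in> \<phi> l then UNIV else {})" using transp_apply[OF X x phiX, where II=II and JJ=JJ] l by simp
  qed
  have ext: "?t \<in> X \<rightarrow>\<^sub>E ?PL" using tin unfolding transp_def by auto
  show ?thesis unfolding conv_hom_def
  proof (intro CollectI conjI allI impI ext)
    fix F x assume cx: "c F x"
    have F: "lfilter (Pow X) (\<subseteq>) F" and x: "x \<in> X" using conv_space_D[OF X cx] by auto
    have fi: "lfilter (Pow ?PL) (\<subseteq>) (fimg X ?PL ?t F)" using fimg_lfilter[OF PiE_Pi[OF ext] F] by simp
    have eq: "circ II JJ L leL limL (fimg X ?PL ?t F) = {a \<in> L. \<phi> a \<in> F}"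
    proof -
      have e1: "\<And>l. l \<in> L \<Longrightarrow> {y \<in> X. ?t y \<in> bul II JJ L leL limL l} = \<phi> l"
      proof -
        fix l assume l: "l \<in> L"
        have lX: "\<phi> l \<subseteq> X" using fA l by auto
        have "\<And>y. y \<in> X \<Longrightarrow> ?t y \<in> bul II JJ L leL limL l \<longleftrightarrow> y \<in> \<phi> l"
          unfolding bul_def using tin tap[OF _ l] by simp
        then show "{y \<in> X. ?t y \<in> bul II JJ L leL limL l} = \<phi> l" using lX by blast
      qed
      have e2: "\<And>l. bul II JJ L leL limL l \<in> Pow ?PL" using bul_sub by (simp only: Pow_iff)
      have "\<And>l. l \<in> L \<Longrightarrow> bul II JJ L leL limL l \<in> fimg X ?PL ?t F \<longleftrightarrow> \<phi> l \<in> F"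
        unfolding fimg_def using e1 e2 by simp
      then show ?thesis unfolding circ_def by blast
    qed
    have H: "lfilter L leL {a \<in> L. \<phi> a \<in> F}" using preimage_lfilter[OF hphi lLX conv_obj_bl[OF L] F] .
    have limH: "limL {a \<in> L. \<phi> a \<in> F} \<in> L" using conv_obj_lim[OF L H] .
    have "Plim X c F \<subseteq> \<phi> (limL {a \<in> L. \<phi> a \<in> F})" using cphi F unfolding continuous_map_def by blast
    then have "x \<in> \<phi> (limL {a \<in> L. \<phi> a \<in> F})" using cx x unfolding Plim_def by auto
    then have "?t x (limL (circ II JJ L leL limL (fimg X ?PL ?t F))) = UNIV"
      unfolding eq using tap[OF x limH] by auto
    then show "ptconv II JJ L leL limL (fimg X ?PL ?t F) (?t x)"
      unfolding ptconv_def bul_def using fi tin[OF x] by auto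
  qed
qed


lemma unit_UNIV_iff: "(s::unit set) = UNIV \<longleftrightarrow> () \<in> s"
  using unit_set_cases[of s] by auto

lemma Union_unit_UNIV: "(\<Union>S :: unit set) = UNIV \<longleftrightarrow> (\<exists>s\<in>S. s = UNIV)"
  by (simp add: unit_UNIV_iff)

lemma Inter_unit_UNIV: "(\<Inter>S :: unit set) = UNIV \<longleftrightarrow> (\<forall>s\<in>S. s = UNIV)"
  by (simp add: unit_UNIV_iff)

lemma transp_val:
  assumes X: "conv_space X c" and x: "x \<in> X" and l: "l \<in> A" and phi: "\<forall>l\<in>A. \<phi> l \<in> Pow X"
  shows "transp II JJ X c A \<phi> x l = (if x \<in> \<phi> l then UNIV else {})"
  using transp_apply[OF X x phi, where II=II and JJ=JJ] l by simp

lemma transp_out: "x \<notin> X \<Longrightarrow> transp II JJ X c A \<phi> x = undefined"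
  unfolding transp_def by simp

lemma transp_surj:
  assumes X: "conv_space X c" and L: "conv_obj L leL limL"
    and g: "g \<in> conv_hom X c (pt II JJ L leL limL) (ptconv II JJ L leL limL)"
    and lLX: "lattice_homs II JJ L leL (Pow X) (\<subseteq>)"
  shows "\<exists>\<phi> \<in> cconv_hom II JJ L leL limL (Pow X) (\<subseteq>) (Plim X c). transp II JJ X c L \<phi> = g"
proof -
  let ?PL = "pt II JJ L leL limL"
  have gX: "g \<in> X \<rightarrow>\<^sub>E ?PL" using g unfolding conv_hom_def by simp
  have gc: "\<And>F x. c F x \<Longrightarrow> ptconv II JJ L leL limL (fimg X ?PL g F) (g x)"
    using g unfolding conv_hom_def by simp
  have gpt: "\<And>x. x \<in> X \<Longrightarrow> g x \<in> ?PL" using gX by auto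
  define \<phi> where "\<phi> = (\<lambda>l\<in>L. {x\<in>X. g x l = UNIV})"
  have phv: "\<And>l. l \<in> L \<Longrightarrow> \<phi> l = {x\<in>X. g x l = UNIV}" unfolding \<phi>_def by simp
  have hom: "C_hom II JJ L leL (Pow X) (\<subseteq>) \<phi>"
    unfolding C_hom_def
  proof (intro conjI ballI allI impI)
    show "\<phi> \<in> L \<rightarrow>\<^sub>E Pow X" unfolding \<phi>_def by auto
  next
    fix a b assume a: "a \<in> L" and b: "b \<in> L" and ab: "leL a b"
    have "\<And>x. x \<in> X \<Longrightarrow> g x a \<subseteq> g x b" using pt_mono[OF gpt a b ab] .
    then show "\<phi> a \<subseteq> \<phi> b" using phv[OF a] phv[OF b] by auto
  next
    fix I y m assume I: "I \<in> II" and y: "y \<in> I \<rightarrow> L" and m: "is_inf L leL (y ` I) m"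
    have mL: "m \<in> L" using m unfolding is_inf_def by simp
    have yL: "\<And>i. i \<in> I \<Longrightarrow> y i \<in> L" using y by blast
    have gm: "\<And>x. x \<in> X \<Longrightarrow> g x m = \<Inter>((g x \<circ> y) ` I)"
    proof -
      fix x assume x: "x \<in> X"
      have "is_inf P1 (\<subseteq>) ((g x \<circ> y) ` I) (g x m)"
        using pt_C_hom[OF gpt[OF x]] I y m unfolding C_hom_def by blast
      then show "g x m = \<Inter>((g x \<circ> y) ` I)" by (simp only: is_inf_P1)
    qed
    have sub: "(\<phi> \<circ> y) ` I \<subseteq> Pow X" using yL phv by auto
    have "\<phi> m = X \<inter> \<Inter>((\<phi> \<circ> y) ` I)"
    proof (rule set_eqI)
      fix x
      show "x \<in> \<phi> m \<longleftrightarrow> x \<in> X \<inter> \<Inter>((\<phi> \<circ> y) ` I)"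
      proof (cases "x \<in> X")
        case True
        have "x \<in> \<phi> m \<longleftrightarrow> g x m = UNIV" using phv[OF mL] True by simp
        also have "\<dots> \<longleftrightarrow> (\<forall>i\<in>I. g x (y i) = UNIV)" using gm[OF True] by (simp add: Inter_unit_UNIV)
        also have "\<dots> \<longleftrightarrow> (\<forall>i\<in>I. x \<in> \<phi> (y i))" using phv yL True by simp
        finally show ?thesis using True by simp
      next
        case False
        then show ?thesis using phv[OF mL] by simp
      qed
    qed
    then show "is_inf (Pow X) (\<subseteq>) ((\<phi> \<circ> y) ` I) (\<phi> m)" using sub by (simp add: is_inf_Pow)
  next
    fix I y m assume I: "I \<in> JJ" and y: "y \<in> I \<rightarrow> L" and m: "is_sup L leL (y ` I) m"
    have mL: "m \<in> L" using m unfolding is_sup_def by simp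
    have yL: "\<And>i. i \<in> I \<Longrightarrow> y i \<in> L" using y by blast
    have gm: "\<And>x. x \<in> X \<Longrightarrow> g x m = \<Union>((g x \<circ> y) ` I)"
    proof -
      fix x assume x: "x \<in> X"
      have "is_sup P1 (\<subseteq>) ((g x \<circ> y) ` I) (g x m)"
        using pt_C_hom[OF gpt[OF x]] I y m unfolding C_hom_def by blast
      then show "g x m = \<Union>((g x \<circ> y) ` I)" by (simp only: is_sup_P1)
    qed
    have sub: "(\<phi> \<circ> y) ` I \<subseteq> Pow X" using yL phv by auto
    have "\<phi> m = \<Union>((\<phi> \<circ> y) ` I)"
    proof (rule set_eqI)
      fix x
      show "x \<in> \<phi> m \<longleftrightarrow> x \<in> \<Union>((\<phi> \<circ> y) ` I)"
      proof (cases "x \<in> X")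
        case True
        have "x \<in> \<phi> m \<longleftrightarrow> g x m = UNIV" using phv[OF mL] True by simp
        also have "\<dots> \<longleftrightarrow> (\<exists>s\<in>(g x \<circ> y) ` I. s = UNIV)" unfolding gm[OF True] by (rule Union_unit_UNIV)
        also have "\<dots> \<longleftrightarrow> (\<exists>i\<in>I. g x (y i) = UNIV)" by (metis (no_types, lifting) comp_apply image_iff)
        also have "\<dots> \<longleftrightarrow> (\<exists>i\<in>I. x \<in> \<phi> (y i))" using phv yL True by simp
        finally show ?thesis by simp
      next
        case False
        then show ?thesis using phv[OF mL] phv yL by auto
      qed
    qed
    then show "is_sup (Pow X) (\<subseteq>) ((\<phi> \<circ> y) ` I) (\<phi> m)" using sub by (simp add: is_sup_Pow)
  qed
  have phiA: "\<phi> \<in> L \<rightarrow>\<^sub>E Pow X" using hom unfolding C_hom_def by simp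
  have cont: "continuous_map L limL (Pow X) (\<subseteq>) (Plim X c) \<phi>"
    unfolding continuous_map_def
  proof (intro allI impI subsetI)
    fix F x assume F: "lfilter (Pow X) (\<subseteq>) F" and xP: "x \<in> Plim X c F"
    have cx: "c F x" and x: "x \<in> X" using xP unfolding Plim_def by auto
    define H where "H = {a \<in> L. \<phi> a \<in> F}"
    have H: "lfilter L leL H" unfolding H_def using preimage_lfilter[OF hom lLX conv_obj_bl[OF L] F] .
    have limH: "limL H \<in> L" using conv_obj_lim[OF L H] .
    have e1: "\<And>l. l \<in> L \<Longrightarrow> {y \<in> X. g y \<in> bul II JJ L leL limL l} = \<phi> l"
      unfolding bul_def using phv gpt by auto
    have e2: "\<And>l. bul II JJ L leL limL l \<in> Pow ?PL" using bul_sub by (simp only: Pow_iff)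
    have "\<And>l. l \<in> L \<Longrightarrow> bul II JJ L leL limL l \<in> fimg X ?PL g F \<longleftrightarrow> \<phi> l \<in> F"
      unfolding fimg_def using e1 e2 by simp
    then have eq: "circ II JJ L leL limL (fimg X ?PL g F) = H" unfolding circ_def H_def by blast
    have "g x (limL H) = UNIV" using gc[OF cx] unfolding ptconv_def bul_def eq by simp
    then show "x \<in> \<phi> (limL {a \<in> L. \<phi> a \<in> F})" using phv[OF limH] x unfolding H_def by simp
  qed
  have phi: "\<phi> \<in> cconv_hom II JJ L leL limL (Pow X) (\<subseteq>) (Plim X c)"
    unfolding cconv_hom_def using hom cont by simp
  have phiX: "\<forall>l\<in>L. \<phi> l \<in> Pow X" using phiA by auto
  have "transp II JJ X c L \<phi> = g"
  proof (rule ext)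
    fix x show "transp II JJ X c L \<phi> x = g x"
    proof (cases "x \<in> X")
      case True
      have gxe: "g x \<in> L \<rightarrow>\<^sub>E P1" using pt_ext[OF gpt[OF True]] .
      show ?thesis
      proof (rule ext)
        fix l show "transp II JJ X c L \<phi> x l = g x l"
        proof (cases "l \<in> L")
          case l: True
          have "transp II JJ X c L \<phi> x l = (if x \<in> \<phi> l then UNIV else {})"
            using transp_val[OF X True l phiX] .
          also have "\<dots> = (if g x l = UNIV then UNIV else {})" using phv[OF l] True by simp
          also have "\<dots> = g x l"
          proof (cases "g x l = UNIV")
            case False
            then have "g x l = {}" using unit_set_cases[of "g x l"] by simp
            then show ?thesis by simp
          qed simp
          finally show ?thesis .
        next
          case False
          have "transp II JJ X c L \<phi> x l = undefined"
            using transp_apply[OF X True phiX, where II=II and JJ=JJ] False by simp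
          then show ?thesis using PiE_arb[OF gxe False] by simp
        qed
      qed
    next
      case False
      show ?thesis using transp_out[OF False] PiE_arb[OF gX False] by simp
    qed
  qed
  then show ?thesis using phi by blast
qed


theorem mainTheorem1:
  fixes II :: "'i set set" and JJ :: "'j set set"
    and L :: "'l set" and leL :: "'l \<Rightarrow> 'l \<Rightarrow> bool" and limL :: "'l set \<Rightarrow> 'l"
    and M :: "'m set" and leM :: "'m \<Rightarrow> 'm \<Rightarrow> bool" and limM :: "'m set \<Rightarrow> 'm"
    and X :: "'x set" and cX :: "'x set set \<Rightarrow> 'x \<Rightarrow> bool"
    and Y :: "'y set" and cY :: "'y set set \<Rightarrow> 'y \<Rightarrow> bool"
  assumes C: "lattice_cat_on II JJ L leL M leM X Y"
    and L: "conv_obj L leL limL" and M: "conv_obj M leM limM"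
    and X: "conv_space X cX" and Y: "conv_space Y cY"
  shows
    \<comment> \<open>P and pt are well defined on objects\<close>
    "conv_obj (Pow X) (\<subseteq>) (Plim X cX)
     \<and> conv_space (pt II JJ L leL limL) (ptconv II JJ L leL limL)
     \<comment> \<open>P and pt are well defined on morphisms\<close>
     \<and> (\<forall>f \<in> conv_hom X cX Y cY.
          Pmap X Y f \<in> cconv_hom II JJ (Pow Y) (\<subseteq>) (Plim Y cY) (Pow X) (\<subseteq>) (Plim X cX))
     \<and> (\<forall>\<psi> \<in> cconv_hom II JJ L leL limL M leM limM.
          ptmap II JJ M leM limM L \<psi>
            \<in> conv_hom (pt II JJ M leM limM) (ptconv II JJ M leM limM)
                       (pt II JJ L leL limL) (ptconv II JJ L leL limL))
     \<comment> \<open>the hom-set bijection\<close>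
     \<and> bij_betw (transp II JJ X cX L)
         (cconv_hom II JJ L leL limL (Pow X) (\<subseteq>) (Plim X cX))
         (conv_hom X cX (pt II JJ L leL limL) (ptconv II JJ L leL limL))
     \<comment> \<open>naturality in the Conv variable\<close>
     \<and> (\<forall>g \<in> conv_hom X cX Y cY. \<forall>\<phi> \<in> cconv_hom II JJ L leL limL (Pow Y) (\<subseteq>) (Plim Y cY).
          transp II JJ X cX L (restrict (Pmap X Y g \<circ> \<phi>) L)
            = restrict (transp II JJ Y cY L \<phi> \<circ> g) X)
     \<comment> \<open>naturality in the C^conv variable\<close>
     \<and> (\<forall>\<psi> \<in> cconv_hom II JJ L leL limL M leM limM.
        \<forall>\<phi> \<in> cconv_hom II JJ M leM limM (Pow X) (\<subseteq>) (Plim X cX).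
          transp II JJ X cX L (restrict (\<phi> \<circ> \<psi>) L)
            = restrict (ptmap II JJ M leM limM L \<psi> \<circ> transp II JJ X cX M \<phi>) X)"
proof -
  have lL1: "lattice_homs II JJ L leL P1 (\<subseteq>)" and lM1: "lattice_homs II JJ M leM P1 (\<subseteq>)"
    and lX1: "lattice_homs II JJ (Pow X) (\<subseteq>) P1 (\<subseteq>)"
    and lLM: "lattice_homs II JJ L leL M leM"
    and lLX: "lattice_homs II JJ L leL (Pow X) (\<subseteq>)" and lMX: "lattice_homs II JJ M leM (Pow X) (\<subseteq>)"
    using C unfolding lattice_cat_on_def by simp_all
  let ?PL = "pt II JJ L leL limL"
  have c1: "conv_obj (Pow X) (\<subseteq>) (Plim X cX)" by (rule pow_conv_obj[OF X])
  have c2: "conv_space ?PL (ptconv II JJ L leL limL)" by (rule pt_conv_space[OF L lL1])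
  have c3: "\<forall>f \<in> conv_hom X cX Y cY.
          Pmap X Y f \<in> cconv_hom II JJ (Pow Y) (\<subseteq>) (Plim Y cY) (Pow X) (\<subseteq>) (Plim X cX)"
    using Pmap_cconv by blast
  have c4: "\<forall>\<psi> \<in> cconv_hom II JJ L leL limL M leM limM.
          ptmap II JJ M leM limM L \<psi>
            \<in> conv_hom (pt II JJ M leM limM) (ptconv II JJ M leM limM)
                       (pt II JJ L leL limL) (ptconv II JJ L leL limL)"
    using ptmap_conv_hom[OF L M _ lLM lM1 lL1] by blast
  have phX: "\<And>\<phi>. \<phi> \<in> cconv_hom II JJ L leL limL (Pow X) (\<subseteq>) (Plim X cX) \<Longrightarrow> \<forall>l\<in>L. \<phi> l \<in> Pow X"
    unfolding cconv_hom_def C_hom_def by auto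
  have inj: "inj_on (transp II JJ X cX L) (cconv_hom II JJ L leL limL (Pow X) (\<subseteq>) (Plim X cX))"
  proof (rule inj_onI)
    fix \<phi>1 \<phi>2 assume p1: "\<phi>1 \<in> cconv_hom II JJ L leL limL (Pow X) (\<subseteq>) (Plim X cX)"
      and p2: "\<phi>2 \<in> cconv_hom II JJ L leL limL (Pow X) (\<subseteq>) (Plim X cX)"
      and eq: "transp II JJ X cX L \<phi>1 = transp II JJ X cX L \<phi>2"
    have e1: "\<phi>1 \<in> L \<rightarrow>\<^sub>E Pow X" and e2: "\<phi>2 \<in> L \<rightarrow>\<^sub>E Pow X"
      using p1 p2 unfolding cconv_hom_def C_hom_def by auto
    show "\<phi>1 = \<phi>2"
    proof (rule ext)
      fix l show "\<phi>1 l = \<phi>2 l"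
      proof (cases "l \<in> L")
        case True
        have s1: "\<phi>1 l \<subseteq> X" and s2: "\<phi>2 l \<subseteq> X" using e1 e2 True by auto
        have "\<And>x. x \<in> X \<Longrightarrow> x \<in> \<phi>1 l \<longleftrightarrow> x \<in> \<phi>2 l"
        proof -
          fix x assume x: "x \<in> X"
          have "transp II JJ X cX L \<phi>1 x l = transp II JJ X cX L \<phi>2 x l" using eq by simp
          then have "(if x \<in> \<phi>1 l then UNIV else {}) = (if x \<in> \<phi>2 l then (UNIV::unit set) else {})"
            using transp_val[OF X x True phX[OF p1], where II=II and JJ=JJ] transp_val[OF X x True phX[OF p2], where II=II and JJ=JJ] by simp
          then show "x \<in> \<phi>1 l \<longleftrightarrow> x \<in> \<phi>2 l" by (cases "x \<in> \<phi>1 l"; cases "x \<in> \<phi>2 l") auto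
        qed
        then show ?thesis using s1 s2 by blast
      next
        case False
        then show ?thesis using PiE_arb[OF e1 False] PiE_arb[OF e2 False] by simp
      qed
    qed
  qed
  have img: "transp II JJ X cX L ` cconv_hom II JJ L leL limL (Pow X) (\<subseteq>) (Plim X cX)
      = conv_hom X cX ?PL (ptconv II JJ L leL limL)"
  proof
    show "transp II JJ X cX L ` cconv_hom II JJ L leL limL (Pow X) (\<subseteq>) (Plim X cX)
      \<subseteq> conv_hom X cX ?PL (ptconv II JJ L leL limL)"
      using transp_conv_hom[OF X L _ lLX lX1 lL1] by blast
    show "conv_hom X cX ?PL (ptconv II JJ L leL limL)
      \<subseteq> transp II JJ X cX L ` cconv_hom II JJ L leL limL (Pow X) (\<subseteq>) (Plim X cX)"
    proof
      fix g assume g: "g \<in> conv_hom X cX ?PL (ptconv II JJ L leL limL)"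
      obtain \<phi> where "\<phi> \<in> cconv_hom II JJ L leL limL (Pow X) (\<subseteq>) (Plim X cX)"
          "transp II JJ X cX L \<phi> = g"
        using transp_surj[OF X L g lLX] by blast
      then show "g \<in> transp II JJ X cX L ` cconv_hom II JJ L leL limL (Pow X) (\<subseteq>) (Plim X cX)"
        by blast
    qed
  qed
  have c5: "bij_betw (transp II JJ X cX L)
         (cconv_hom II JJ L leL limL (Pow X) (\<subseteq>) (Plim X cX))
         (conv_hom X cX ?PL (ptconv II JJ L leL limL))"
    unfolding bij_betw_def using inj img by simp
  have c6: "\<forall>g \<in> conv_hom X cX Y cY. \<forall>\<phi> \<in> cconv_hom II JJ L leL limL (Pow Y) (\<subseteq>) (Plim Y cY).
          transp II JJ X cX L (restrict (Pmap X Y g \<circ> \<phi>) L)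
            = restrict (transp II JJ Y cY L \<phi> \<circ> g) X"
  proof (intro ballI)
    fix g \<phi> assume g: "g \<in> conv_hom X cX Y cY"
      and p: "\<phi> \<in> cconv_hom II JJ L leL limL (Pow Y) (\<subseteq>) (Plim Y cY)"
    have gY: "\<And>x. x \<in> X \<Longrightarrow> g x \<in> Y" using g unfolding conv_hom_def by auto
    have pY: "\<forall>l\<in>L. \<phi> l \<in> Pow Y" using p unfolding cconv_hom_def C_hom_def by auto
    have pv: "\<And>l. l \<in> L \<Longrightarrow> restrict (Pmap X Y g \<circ> \<phi>) L l = {x \<in> X. g x \<in> \<phi> l}"
      using pY by (simp add: Pmap_apply)
    have pX: "\<forall>l\<in>L. restrict (Pmap X Y g \<circ> \<phi>) L l \<in> Pow X" using pv by auto
    show "transp II JJ X cX L (restrict (Pmap X Y g \<circ> \<phi>) L)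
            = restrict (transp II JJ Y cY L \<phi> \<circ> g) X"
    proof (rule ext)
      fix x show "transp II JJ X cX L (restrict (Pmap X Y g \<circ> \<phi>) L) x
            = restrict (transp II JJ Y cY L \<phi> \<circ> g) X x"
      proof (cases "x \<in> X")
        case True
        have "transp II JJ X cX L (restrict (Pmap X Y g \<circ> \<phi>) L) x
            = (\<lambda>l\<in>L. if x \<in> restrict (Pmap X Y g \<circ> \<phi>) L l then UNIV else {})"
          by (rule transp_apply[OF X True pX])
        also have "\<dots> = (\<lambda>l\<in>L. if g x \<in> \<phi> l then UNIV else {})"
          using pv True by (intro restrict_ext) simp
        also have "\<dots> = transp II JJ Y cY L \<phi> (g x)"
          by (rule transp_apply[OF Y gY[OF True] pY, symmetric])
        finally show ?thesis using True by simp
      next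
        case False
        then show ?thesis using transp_out[OF False] by simp
      qed
    qed
  qed
  have c7: "\<forall>\<psi> \<in> cconv_hom II JJ L leL limL M leM limM.
        \<forall>\<phi> \<in> cconv_hom II JJ M leM limM (Pow X) (\<subseteq>) (Plim X cX).
          transp II JJ X cX L (restrict (\<phi> \<circ> \<psi>) L)
            = restrict (ptmap II JJ M leM limM L \<psi> \<circ> transp II JJ X cX M \<phi>) X"
  proof (intro ballI)
    fix \<psi> \<phi> assume ps: "\<psi> \<in> cconv_hom II JJ L leL limL M leM limM"
      and p: "\<phi> \<in> cconv_hom II JJ M leM limM (Pow X) (\<subseteq>) (Plim X cX)"
    have psM: "\<And>l. l \<in> L \<Longrightarrow> \<psi> l \<in> M" using ps unfolding cconv_hom_def C_hom_def by auto
    have pX: "\<forall>m\<in>M. \<phi> m \<in> Pow X" using p unfolding cconv_hom_def C_hom_def by auto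
    have pv: "\<And>l. l \<in> L \<Longrightarrow> restrict (\<phi> \<circ> \<psi>) L l = \<phi> (\<psi> l)" by simp
    have qX: "\<forall>l\<in>L. restrict (\<phi> \<circ> \<psi>) L l \<in> Pow X" using pv pX psM by auto
    have tM: "transp II JJ X cX M \<phi> \<in> conv_hom X cX (pt II JJ M leM limM) (ptconv II JJ M leM limM)"
      using transp_conv_hom[OF X M p lMX lX1 lM1] .
    show "transp II JJ X cX L (restrict (\<phi> \<circ> \<psi>) L)
            = restrict (ptmap II JJ M leM limM L \<psi> \<circ> transp II JJ X cX M \<phi>) X"
    proof (rule ext)
      fix x show "transp II JJ X cX L (restrict (\<phi> \<circ> \<psi>) L) x
            = restrict (ptmap II JJ M leM limM L \<psi> \<circ> transp II JJ X cX M \<phi>) X x"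
      proof (cases "x \<in> X")
        case True
        have tin: "transp II JJ X cX M \<phi> x \<in> pt II JJ M leM limM"
          using tM True unfolding conv_hom_def by auto
        have "transp II JJ X cX L (restrict (\<phi> \<circ> \<psi>) L) x
            = (\<lambda>l\<in>L. if x \<in> restrict (\<phi> \<circ> \<psi>) L l then UNIV else {})"
          by (rule transp_apply[OF X True qX])
        also have "\<dots> = (\<lambda>l\<in>L. transp II JJ X cX M \<phi> x (\<psi> l))"
        proof (rule restrict_ext)
          fix l assume l: "l \<in> L"
          show "(if x \<in> restrict (\<phi> \<circ> \<psi>) L l then UNIV else {}) = transp II JJ X cX M \<phi> x (\<psi> l)"
            using transp_val[OF X True psM[OF l] pX, where II=II and JJ=JJ] l by simp
        qed
        also have "\<dots> = ptmap II JJ M leM limM L \<psi> (transp II JJ X cX M \<phi> x)"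
          unfolding ptmap_def using tin by (simp add: comp_def)
        finally show ?thesis using True by simp
      next
        case False
        then show ?thesis using transp_out[OF False] by simp
      qed
    qed
  qed
  show ?thesis using c1 c2 c3 c4 c5 c6 c7 by blast
qed

end
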